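(* There is no arrangement $\mathcal{A}$ of $14$ lines in $\mathbb{P}^2\mathbb{C}$ admitting a partition $\mathcal{A}=\mathcal{L}\sqcup\mathcal{K}$ with $|\mathcal{L}|=6$ and $|\mathcal{K}|=8$ such that each line in $\mathcal{L}$ contains exactly $4$ quadruple points of type $(LKLK)$ and each line in $\mathcal{K}$ contains exactly $3$ quadruple points of type $(LKLK)$.
   Context: Given a partition $\mathcal{A}=\mathcal{L}\sqcup\mathcal{K}$ of the lines of an arrangement, a quadruple point of type $(LKLK)$ is a point of $\mathbb{P}^2$ lying on exactly four lines of $\mathcal{A}$, two of them in $\mathcal{L}$ and two in $\mathcal{K}$. *)

theory Defs
  imports Complex_Main
begin

text \<open>Homogeneous coordinates in C^3. Points and lines of the complex projective
plane are represented by nonzero vectors, up to nonzero scalar multiples.\<close>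

type_synonym cvec = "complex \<times> complex \<times> complex"

definition smult3 :: "complex \<Rightarrow> cvec \<Rightarrow> cvec" where
  "smult3 c v = (case v of (x, y, z) \<Rightarrow> (c * x, c * y, c * z))"

definition proj_class :: "cvec \<Rightarrow> cvec set" where
  "proj_class v = {w. \<exists>c. c \<noteq> 0 \<and> w = smult3 c v}"

definition incid :: "cvec \<Rightarrow> cvec \<Rightarrow> bool" where
  "incid p l \<longleftrightarrow> (case p of (x, y, z) \<Rightarrow> case l of (a, b, c) \<Rightarrow> a * x + b * y + c * z = 0)"

definition line_arrangement :: "cvec set \<Rightarrow> bool" where
  "line_arrangement A \<longleftrightarrow> finite A \<and> (\<forall>l\<in>A. l \<noteq> (0, 0, 0)) \<and>
     (\<forall>l\<in>A. \<forall>m\<in>A. l \<noteq> m \<longrightarrow> proj_class l \<noteq> proj_class m)"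

text \<open>p is a quadruple point of type (LKLK) for the partition L, K: it lies on exactly
two lines of L and exactly two lines of K (hence on exactly four lines of L \<union> K).\<close>
definition quad_LKLK :: "cvec set \<Rightarrow> cvec set \<Rightarrow> cvec \<Rightarrow> bool" where
  "quad_LKLK L K p \<longleftrightarrow> p \<noteq> (0, 0, 0) \<and> card {l \<in> L. incid p l} = 2 \<and> card {k \<in> K. incid p k} = 2"

definition num_LKLK_on :: "cvec set \<Rightarrow> cvec set \<Rightarrow> cvec \<Rightarrow> nat" where
  "num_LKLK_on L K l = card {proj_class p | p. quad_LKLK L K p \<and> incid p l}"

end

theory Submission
  imports Defs
begin


fun dot :: "cvec \<Rightarrow> cvec \<Rightarrow> complex" where
  "dot (a1,a2,a3) (b1,b2,b3) = a1*b1+a2*b2+a3*b3"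
fun cross :: "cvec \<Rightarrow> cvec \<Rightarrow> cvec" where
  "cross (a1,a2,a3) (b1,b2,b3) = (a2*b3-a3*b2, a3*b1-a1*b3, a1*b2-a2*b1)"
definition det3 :: "cvec \<Rightarrow> cvec \<Rightarrow> cvec \<Rightarrow> complex" where
  "det3 u v w = dot (cross u v) w"
fun lin :: "cvec \<Rightarrow> cvec \<Rightarrow> cvec \<Rightarrow> cvec \<Rightarrow> cvec" where
  "lin r1 r2 r3 v = (dot v r1, dot v r2, dot v r3)"

lemma det_mult: "det3 (lin r1 r2 r3 u) (lin r1 r2 r3 v) (lin r1 r2 r3 w) = det3 r1 r2 r3 * det3 u v w"
  by (cases r1; cases r2; cases r3; cases u; cases v; cases w) (simp add: det3_def algebra_simps)

lemma det_adj: "det3 (cross b c) (cross c a) (cross a b) = (det3 a b c)^2"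
  by (cases a; cases b; cases c) (simp add: det3_def algebra_simps power2_eq_square)

lemma cc: "det3 (cross a b) (cross c d) (cross e f) = det3 c d f * det3 a b e - det3 c d e * det3 a b f"
  by (cases a; cases b; cases c; cases d; cases e; cases f) (simp add: det3_def algebra_simps)


lemma core_norm:
  fixes p q r x y z u v w :: complex
  assumes E1: "det3 (cross (p,0,0) (0,q,0)) (cross (0,0,r) (x,y,z)) (cross (1,1,1) (u,v,w)) = 0"
  and E3: "det3 (cross (p,0,0) (1,1,1)) (cross (0,0,r) (x,y,z)) (cross (0,q,0) (u,v,w)) = 0"
  and E4: "det3 (cross (p,0,0) (1,1,1)) (cross (0,0,r) (u,v,w)) (cross (0,q,0) (x,y,z)) = 0"
  and E6: "det3 (cross (p,0,0) (x,y,z)) (cross (0,0,r) (1,1,1)) (cross (0,q,0) (u,v,w)) = 0"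
  and E8: "det3 (cross (p,0,0) (u,v,w)) (cross (0,0,r) (1,1,1)) (cross (0,q,0) (x,y,z)) = 0"
  and nz: "p \<noteq> 0" "q \<noteq> 0" "r \<noteq> 0"
  shows "cross (x,y,z) (1,1,1) = (0,0,0) \<or> cross (x,y,z) (u,v,w) = (0,0,0)"
proof -
  have pqr: "p*q*r \<noteq> 0" using nz by simp
  have "det3 (cross (p,0,0) (0,q,0)) (cross (0,0,r) (x,y,z)) (cross (1,1,1) (u,v,w)) = p*q*r*(x*v - y*u - (x-y)*w)"
    by (simp add: det3_def algebra_simps)
  with E1 pqr have e1: "x*v - y*u - (x-y)*w = 0" by simp
  have "det3 (cross (p,0,0) (1,1,1)) (cross (0,0,r) (x,y,z)) (cross (0,q,0) (u,v,w)) = p*q*r*(y*u - x*w)"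
    by (simp add: det3_def algebra_simps)
  with E3 pqr have e3: "y*u = x*w" by simp
  have "det3 (cross (p,0,0) (1,1,1)) (cross (0,0,r) (u,v,w)) (cross (0,q,0) (x,y,z)) = p*q*r*(v*x - u*z)"
    by (simp add: det3_def algebra_simps)
  with E4 pqr have e4: "v*x = u*z" by simp
  have "det3 (cross (p,0,0) (x,y,z)) (cross (0,0,r) (1,1,1)) (cross (0,q,0) (u,v,w)) = p*q*r*(u*z - y*w)"
    by (simp add: det3_def algebra_simps)
  with E6 pqr have e6: "u*z = y*w" by simp
  have "det3 (cross (p,0,0) (u,v,w)) (cross (0,0,r) (1,1,1)) (cross (0,q,0) (x,y,z)) = p*q*r*(x*w - v*z)"
    by (simp add: det3_def algebra_simps)
  with E8 pqr have e8: "x*w = v*z" by simp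
  have "x*v - y*u - (x-y)*w = x*v - y*u - x*w + y*w" by (simp add: algebra_simps)
  also have "\<dots> = 2*(v*x - y*u)" using e3 e4 e6 by (simp add: algebra_simps)
  finally have ab: "y*u = v*x" using e1 by simp
  show ?thesis
  proof (cases "y*u = 0")
    case True
    then have z: "y*u = 0" "x*w = 0" "v*z = 0" "v*x=0" "u*z=0" "y*w=0" using e3 e4 e6 e8 ab by auto
    then show ?thesis by auto
  next
    case False
    then have "x = y" "y = z" using e3 e4 e6 e8 ab by (auto simp: algebra_simps)
    then show ?thesis by simp
  qed
qed



lemma det3_smult: "det3 (smult3 s1 u) (smult3 s2 v) (smult3 s3 w) = s1*s2*s3*det3 u v w"
  by (cases u; cases v; cases w) (simp add: det3_def smult3_def algebra_simps)

lemma det3_rep: "det3 a a x = 0" "det3 a x a = 0" "det3 x a a = 0"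
  by (cases a; cases x; simp add: det3_def algebra_simps)+

lemma lin_cross: "lin (smult3 s1 (cross b a2)) (smult3 s2 (cross a2 a)) (smult3 s3 (cross a b)) v
   = (s1 * det3 v b a2, s2 * det3 a v a2, s3 * det3 a b v)"
  by (cases a; cases b; cases a2; cases v) (simp add: det3_def smult3_def algebra_simps)

lemma cross_back:
  assumes k: "det3 r1 r2 r3 \<noteq> 0" and c: "cross (lin r1 r2 r3 u) (lin r1 r2 r3 v) = (0,0,0)"
  shows "cross u v = (0,0,0)"
proof -
  have "det3 r1 r2 r3 * det3 u v w = 0" for w
  proof -
    have "det3 (lin r1 r2 r3 u) (lin r1 r2 r3 v) (lin r1 r2 r3 w) = 0"
      unfolding det3_def c by simp
    then show ?thesis by (simp only: det_mult)
  qed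
  with k have h: "\<And>w. det3 u v w = 0" by simp
  obtain u1 u2 u3 where u: "u = (u1,u2,u3)" by (cases u)
  obtain v1 v2 v3 where v: "v = (v1,v2,v3)" by (cases v)
  show ?thesis using h[of "(1,0,0)"] h[of "(0,1,0)"] h[of "(0,0,1)"] by (simp add: u v det3_def)
qed

lemma core_gen:
  fixes a b a2 b2 c c2 :: cvec
  assumes D: "det3 a b a2 \<noteq> 0" and g1: "det3 b2 b a2 \<noteq> 0" and g2: "det3 a b2 a2 \<noteq> 0"
    and g3: "det3 a b b2 \<noteq> 0"
  and E1: "det3 (cross a b) (cross a2 c) (cross b2 c2) = 0"
  and E3: "det3 (cross a b2) (cross a2 c) (cross b c2) = 0"
  and E4: "det3 (cross a b2) (cross a2 c2) (cross b c) = 0"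
  and E6: "det3 (cross a c) (cross a2 b2) (cross b c2) = 0"
  and E8: "det3 (cross a c2) (cross a2 b2) (cross b c) = 0"
  shows "cross c b2 = (0,0,0) \<or> cross c c2 = (0,0,0)"
proof -
  define r1 where "r1 = smult3 (1/det3 b2 b a2) (cross b a2)"
  define r2 where "r2 = smult3 (1/det3 a b2 a2) (cross a2 a)"
  define r3 where "r3 = smult3 (1/det3 a b b2) (cross a b)"
  define T where "T = lin r1 r2 r3"
  have T: "T v = (det3 v b a2 / det3 b2 b a2, det3 a v a2 / det3 a b2 a2, det3 a b v / det3 a b b2)" for v
    unfolding T_def r1_def r2_def r3_def lin_cross by simp
  have "det3 r1 r2 r3 = (1/det3 b2 b a2) * (1/det3 a b2 a2) * (1/det3 a b b2) * det3 (cross b a2) (cross a2 a) (cross a b)"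
    unfolding r1_def r2_def r3_def det3_smult by simp
  also have "\<dots> = (1/det3 b2 b a2) * (1/det3 a b2 a2) * (1/det3 a b b2) * (det3 a b a2)^2"
    by (simp add: det_adj)
  finally have k: "det3 r1 r2 r3 \<noteq> 0" using D g1 g2 g3 by simp
  have pres: "det3 (cross (T x1) (T x2)) (cross (T x3) (T x4)) (cross (T x5) (T x6))
     = (det3 r1 r2 r3)^2 * det3 (cross x1 x2) (cross x3 x4) (cross x5 x6)" for x1 x2 x3 x4 x5 x6
    unfolding cc T_def det_mult by (simp add: algebra_simps power2_eq_square)
  have Ta: "T a = (det3 a b a2 / det3 b2 b a2, 0, 0)" by (simp add: T det3_rep)
  have Tb: "T b = (0, det3 a b a2 / det3 a b2 a2, 0)" by (simp add: T det3_rep)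
  have Ta2: "T a2 = (0, 0, det3 a b a2 / det3 a b b2)" by (simp add: T det3_rep)
  have Tb2: "T b2 = (1,1,1)" using g1 g2 g3 by (simp add: T)
  obtain x y z where Tc: "T c = (x,y,z)" by (cases "T c")
  obtain u v w where Tc2: "T c2 = (u,v,w)" by (cases "T c2")
  have "cross (T c) (T b2) = (0,0,0) \<or> cross (T c) (T c2) = (0,0,0)"
    unfolding Tc Tc2 Tb2
    apply (rule core_norm[where p="det3 a b a2 / det3 b2 b a2" and q="det3 a b a2 / det3 a b2 a2" and r = "det3 a b a2 / det3 a b b2"])
    using pres[of a b a2 c b2 c2] pres[of a b2 a2 c b c2] pres[of a b2 a2 c2 b c]
      pres[of a c a2 b2 b c2] pres[of a c2 a2 b2 b c] E1 E3 E4 E6 E8 D g1 g2 g3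
    by (simp_all add: Ta Tb Ta2 Tb2 Tc Tc2)
  then show ?thesis using cross_back[OF k] unfolding T_def by blast
qed



lemma incid_dot: "incid p l \<longleftrightarrow> dot p l = 0"
  by (cases p; cases l) (simp add: incid_def algebra_simps)

lemma dot_smult: "dot (smult3 c p) l = c * dot p l"
  by (cases p; cases l) (simp add: smult3_def algebra_simps)

lemma incid_smult: "c \<noteq> 0 \<Longrightarrow> incid (smult3 c p) l \<longleftrightarrow> incid p l"
  by (simp add: incid_dot dot_smult)

lemma smult3_comp: "smult3 a (smult3 b p) = smult3 (a*b) p"
  by (cases p) (simp add: smult3_def)

lemma smult3_one: "smult3 1 p = p"
  by (cases p) (simp add: smult3_def)

lemma smult3_zero: "c \<noteq> 0 \<Longrightarrow> smult3 c p = (0,0,0) \<longleftrightarrow> p = (0,0,0)"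
  by (cases p) (simp add: smult3_def)

lemma par_ex:
  assumes u: "u \<noteq> (0,0,0)" and c: "cross u v = (0,0,0)"
  shows "\<exists>t. v = smult3 t u"
proof -
  obtain u1 u2 u3 where U: "u = (u1,u2,u3)" by (cases u)
  obtain v1 v2 v3 where V: "v = (v1,v2,v3)" by (cases v)
  have e: "u2*v3 = u3*v2" "u3*v1 = u1*v3" "u1*v2 = u2*v1" using c by (simp_all add: U V)
  show ?thesis
  proof (cases "u1 = 0")
    case False
    have "v2 = v1/u1*u2" "v3 = v1/u1*u3" using e False
      by (metis mult.commute nonzero_mult_div_cancel_left times_divide_eq_left)+
    then have "v = smult3 (v1/u1) u" using False by (simp add: U V smult3_def)
    then show ?thesis by blast
  next
    case z1: True
    show ?thesis
    proof (cases "u2 = 0")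
      case False
      have "v1 = v2/u2*u1" "v3 = v2/u2*u3" using e False z1
        by (metis mult.commute nonzero_mult_div_cancel_left times_divide_eq_left mult_zero_left)+
      then have "v = smult3 (v2/u2) u" using False by (simp add: U V smult3_def)
      then show ?thesis by blast
    next
      case True
      then have u3: "u3 \<noteq> 0" using u z1 by (simp add: U)
      have "v1 = v3/u3*u1" "v2 = v3/u3*u2" using e True z1 u3
        by (metis mult.commute nonzero_mult_div_cancel_left times_divide_eq_left mult_zero_left)+
      then have "v = smult3 (v3/u3) u" using u3 by (simp add: U V smult3_def)
      then show ?thesis by blast
    qed
  qed
qed

lemma cross_smult2: "cross u (smult3 t u) = (0,0,0)"
  by (cases u) (simp add: smult3_def algebra_simps)

lemma proj_class_eq:
  assumes u: "u \<noteq> (0,0,0)" and v: "v \<noteq> (0,0,0)"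
  shows "proj_class u = proj_class v \<longleftrightarrow> cross u v = (0,0,0)"
proof
  assume "proj_class u = proj_class v"
  moreover have "v \<in> proj_class v" unfolding proj_class_def
    by (rule CollectI, rule exI[of _ 1]) (simp add: smult3_one)
  ultimately obtain c where "v = smult3 c u" unfolding proj_class_def by auto
  then show "cross u v = (0,0,0)" by (simp add: cross_smult2)
next
  assume "cross u v = (0,0,0)"
  then obtain t where t: "v = smult3 t u" using par_ex u by blast
  have t0: "t \<noteq> 0" using v t by (cases u) (auto simp: smult3_def)
  show "proj_class u = proj_class v"
  proof (rule set_eqI)
    fix w
    show "w \<in> proj_class u \<longleftrightarrow> w \<in> proj_class v"
    proof
      assume "w \<in> proj_class u"
      then obtain c where c: "c \<noteq> 0" "w = smult3 c u" unfolding proj_class_def by auto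
      then have "w = smult3 (c/t) v" using t t0 by (simp add: smult3_comp)
      then show "w \<in> proj_class v" unfolding proj_class_def using c t0 by (intro CollectI exI[of _ "c/t"]) simp
    next
      assume "w \<in> proj_class v"
      then obtain c where c: "c \<noteq> 0" "w = smult3 c v" unfolding proj_class_def by auto
      then have "w = smult3 (c*t) u" using t by (simp add: smult3_comp)
      then show "w \<in> proj_class u" unfolding proj_class_def using c t0 by (intro CollectI exI[of _ "c*t"]) simp
    qed
  qed
qed

lemma class_incid:
  assumes "proj_class p = proj_class q" "incid q l"
  shows "incid p l"
proof -
  have "p \<in> proj_class p" unfolding proj_class_def
    by (rule CollectI, rule exI[of _ 1]) (simp add: smult3_one)
  then obtain c where "c \<noteq> 0" "p = smult3 c q" using assms(1) unfolding proj_class_def by auto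
  then show ?thesis using assms(2) incid_smult by simp
qed

lemma cross_sym: "cross u v = (0,0,0) \<longleftrightarrow> cross v u = (0,0,0)"
  by (cases u; cases v) (auto simp: algebra_simps)

lemma triple_id: "cross (p1,p2,p3) (cross (l1,l2,l3) (m1,m2,m3)) =
   (l1 * dot (p1,p2,p3) (m1,m2,m3) - m1 * dot (p1,p2,p3) (l1,l2,l3),
    l2 * dot (p1,p2,p3) (m1,m2,m3) - m2 * dot (p1,p2,p3) (l1,l2,l3),
    l3 * dot (p1,p2,p3) (m1,m2,m3) - m3 * dot (p1,p2,p3) (l1,l2,l3))"
  by (simp add: algebra_simps)

lemma triple0: "dot p l = 0 \<Longrightarrow> dot p m = 0 \<Longrightarrow> cross p (cross l m) = (0,0,0)"
proof -
  assume a: "dot p l = 0" "dot p m = 0"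
  obtain p1 p2 p3 where P: "p = (p1,p2,p3)" by (cases p)
  obtain l1 l2 l3 where Lq: "l = (l1,l2,l3)" by (cases l)
  obtain m1 m2 m3 where M: "m = (m1,m2,m3)" by (cases m)
  show ?thesis using a unfolding P Lq M triple_id by simp
qed

lemma par_trans:
  assumes "b \<noteq> (0,0,0)" "cross a b = (0,0,0)" "cross b c = (0,0,0)"
  shows "cross a c = (0,0,0)"
proof (cases "a = (0,0,0)")
  case True then show ?thesis by (cases c) simp
next
  case False
  obtain t where t: "b = smult3 t a" using par_ex[OF False assms(2)] by blast
  with assms(1) have "t \<noteq> 0" by (cases a) (auto simp: smult3_def)
  obtain s where s: "c = smult3 s b" using par_ex[OF assms(1) assms(3)] by blast
  show ?thesis using t s by (simp add: smult3_comp cross_smult2)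
qed

lemma meet_alg:
  assumes "cross l m \<noteq> (0,0,0)" "p \<noteq> (0,0,0)" "q \<noteq> (0,0,0)"
    "incid p l" "incid p m" "incid q l" "incid q m"
  shows "cross p q = (0,0,0)"
proof -
  have 1: "cross p (cross l m) = (0,0,0)" using assms triple0 by (simp add: incid_dot)
  have 2: "cross q (cross l m) = (0,0,0)" using assms triple0 by (simp add: incid_dot)
  then have "cross (cross l m) q = (0,0,0)" using cross_sym by blast
  then show ?thesis using par_trans[OF assms(1) 1] by blast
qed

lemma det3_cyc: "det3 u v w = det3 v w u"
  by (cases u; cases v; cases w) (simp add: det3_def algebra_simps)

lemma det_on:
  assumes "cross x y \<noteq> (0,0,0)" "p \<noteq> (0,0,0)" "incid p x" "incid p y" "det3 x y z = 0"
  shows "incid p z"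
proof -
  have "cross p (cross x y) = (0,0,0)" using assms triple0 by (simp add: incid_dot)
  then obtain t where t: "cross x y = smult3 t p" using par_ex assms(2) by blast
  with assms(1) have "t \<noteq> 0" by (cases p) (auto simp: smult3_def)
  have "det3 x y z = t * dot p z" by (simp add: det3_def t dot_smult)
  then show ?thesis using assms(5) \<open>t \<noteq> 0\<close> by (simp add: incid_dot)
qed

lemma cramer: "(dot p k = 0) \<Longrightarrow> dot q k = 0 \<Longrightarrow> dot r k = 0 \<Longrightarrow> k \<noteq> (0,0,0) \<Longrightarrow> det3 p q r = 0"
proof -
  assume a: "dot p k = 0" "dot q k = 0" "dot r k = 0" "k \<noteq> (0,0,0)"
  obtain k1 k2 k3 where K: "k = (k1,k2,k3)" by (cases k)
  have "\<And>i. i \<in> {k1,k2,k3} \<Longrightarrow> det3 p q r * i = 0"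
  proof -
    fix i assume "i \<in> {k1,k2,k3}"
    have h: "det3 p q r * k1 = dot p k * fst (cross q r) + dot q k * fst (cross r p) + dot r k * fst (cross p q)"
         "det3 p q r * k2 = dot p k * fst (snd (cross q r)) + dot q k * fst (snd (cross r p)) + dot r k * fst (snd (cross p q))"
         "det3 p q r * k3 = dot p k * snd (snd (cross q r)) + dot q k * snd (snd (cross r p)) + dot r k * snd (snd (cross p q))"
      by (cases p; cases q; cases r; simp add: K det3_def algebra_simps)+
    then show "det3 p q r * i = 0" using a \<open>i \<in> _\<close> by auto
  qed
  then show ?thesis using a(4) K by auto
qed

lemma det_from_pts:
  assumes k: "k \<noteq> (0,0,0)" and nz: "p \<noteq> (0,0,0)" "q \<noteq> (0,0,0)" "r \<noteq> (0,0,0)"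
  and np: "cross x y \<noteq> (0,0,0)" "cross x2 z \<noteq> (0,0,0)" "cross y2 z2 \<noteq> (0,0,0)"
  and ip: "incid p x" "incid p y" "incid p k"
  and iq: "incid q x2" "incid q z" "incid q k"
  and ir: "incid r y2" "incid r z2" "incid r k"
  shows "det3 (cross x y) (cross x2 z) (cross y2 z2) = 0"
proof -
  have "cross p (cross x y) = (0,0,0)" using ip triple0 by (simp add: incid_dot)
  then obtain t1 where 1: "cross x y = smult3 t1 p" using par_ex nz by blast
  have "cross q (cross x2 z) = (0,0,0)" using iq triple0 by (simp add: incid_dot)
  then obtain t2 where 2: "cross x2 z = smult3 t2 q" using par_ex nz by blast
  have "cross r (cross y2 z2) = (0,0,0)" using ir triple0 by (simp add: incid_dot)
  then obtain t3 where 3: "cross y2 z2 = smult3 t3 r" using par_ex nz by blast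
  have "det3 p q r = 0" using cramer ip iq ir k by (simp add: incid_dot)
  then show ?thesis by (simp add: 1 2 3 det3_smult)
qed

lemma det3_swap3: "det3 A B (cross v u) = - det3 A B (cross u v)"
  by (cases A; cases B; cases u; cases v) (simp add: det3_def algebra_simps)




locale conf =
  fixes L K :: "cvec set"
  assumes arr: "line_arrangement (L \<union> K)" and disj: "L \<inter> K = {}"
    and cL: "card L = 6" and cK: "card K = 8"
    and nL: "\<forall>l\<in>L. num_LKLK_on L K l = 4" and nK: "\<forall>k\<in>K. num_LKLK_on L K k = 3"
begin

abbreviation "QP p \<equiv> quad_LKLK L K p"
definition meets where "meets m n \<longleftrightarrow> (\<exists>p. QP p \<and> incid p m \<and> incid p n)"

lemma meets_sym: "meets m n \<longleftrightarrow> meets n m"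
  unfolding meets_def by blast

lemma finL: "finite L" using cL card.infinite by fastforce
lemma finK: "finite K" using cK card.infinite by fastforce

lemma nzA: "l \<in> L \<union> K \<Longrightarrow> l \<noteq> (0,0,0)" using arr unfolding line_arrangement_def by blast

lemma distA: "l \<in> L \<union> K \<Longrightarrow> m \<in> L \<union> K \<Longrightarrow> l \<noteq> m \<Longrightarrow> cross l m \<noteq> (0,0,0)"
proof -
  assume a: "l \<in> L \<union> K" "m \<in> L \<union> K" "l \<noteq> m"
  then have "proj_class l \<noteq> proj_class m" using arr unfolding line_arrangement_def by blast
  then show ?thesis using proj_class_eq nzA a by blast
qed

lemma QP_nz: "QP p \<Longrightarrow> p \<noteq> (0,0,0)" by (simp add: quad_LKLK_def)
lemma QP_L: "QP p \<Longrightarrow> card {l\<in>L. incid p l} = 2" by (simp add: quad_LKLK_def)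
lemma QP_K: "QP p \<Longrightarrow> card {l\<in>K. incid p l} = 2" by (simp add: quad_LKLK_def)

lemma same_pt:
  assumes "l \<in> L \<union> K" "m \<in> L \<union> K" "l \<noteq> m" "p \<noteq> (0,0,0)" "q \<noteq> (0,0,0)"
    "incid p l" "incid p m" "incid q l" "incid q m"
  shows "proj_class p = proj_class q"
  using meet_alg[OF distA[OF assms(1-3)] assms(4-9)] proj_class_eq assms(4,5) by blast

lemma transfer:
  assumes "l \<in> L \<union> K" "m \<in> L \<union> K" "l \<noteq> m" "p \<noteq> (0,0,0)" "q \<noteq> (0,0,0)"
    "incid p l" "incid p m" "incid q l" "incid q m" "incid q n"
  shows "incid p n"
  using same_pt[OF assms(1-9)] class_incid assms(10) by blast

lemma no3:
  assumes "QP p" "l1 \<in> L" "l2 \<in> L" "l3 \<in> L" "l1 \<noteq> l2" "l1 \<noteq> l3" "l2 \<noteq> l3"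
    "incid p l1" "incid p l2" "incid p l3"
  shows False
proof -
  have "{l1,l2,l3} \<subseteq> {l\<in>L. incid p l}" using assms by auto
  then have "card {l1,l2,l3} \<le> card {l\<in>L. incid p l}" by (rule card_mono[rotated]) (simp add: finL)
  then show False using assms QP_L by simp
qed

lemma other_L:
  assumes "QP p" "m \<in> L" "incid p m"
  shows "\<exists>m'\<in>L. m' \<noteq> m \<and> incid p m'"
proof -
  obtain x y where xy: "{l\<in>L. incid p l} = {x,y}" "x \<noteq> y" using QP_L[OF assms(1)] card_2_iff by metis
  have "m \<in> {x,y}" using xy(1) assms by blast
  moreover have "x \<in> L \<and> incid p x" "y \<in> L \<and> incid p y"
    using xy(1) by (metis (mono_tags, lifting) insertCI mem_Collect_eq)+
  ultimately show ?thesis using xy(2) by auto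
qed

lemma two_K:
  assumes "QP p"
  shows "\<exists>k1 k2. k1 \<in> K \<and> k2 \<in> K \<and> k1 \<noteq> k2 \<and> incid p k1 \<and> incid p k2"
proof -
  obtain x y where xy: "{l\<in>K. incid p l} = {x,y}" "x \<noteq> y" using QP_K[OF assms(1)] card_2_iff by metis
  moreover have "x \<in> K \<and> incid p x" "y \<in> K \<and> incid p y"
    using xy(1) by (metis (mono_tags, lifting) insertCI mem_Collect_eq)+
  ultimately show ?thesis by blast
qed

lemma QP_smult: "QP p \<Longrightarrow> c \<noteq> 0 \<Longrightarrow> QP (smult3 c p)"
  unfolding quad_LKLK_def by (simp add: incid_smult smult3_zero)


end


context conf begin
lemma fiber_count:
  assumes g: "g \<in> L \<union> K" and Y: "Y \<subseteq> L" "g \<notin> Y"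
    and pos: "num_LKLK_on L K g > 0"
    and n: "\<And>p. QP p \<Longrightarrow> incid p g \<Longrightarrow> card {m\<in>Y. incid p m} = n"
  shows "card {m\<in>Y. meets g m} = n * num_LKLK_on L K g"
proof -
  define S where "S = {proj_class p | p. QP p \<and> incid p g}"
  have numS: "num_LKLK_on L K g = card S" unfolding S_def num_LKLK_on_def by simp
  have finS: "finite S" using pos numS card.infinite by fastforce
  define X where "X = {m\<in>Y. meets g m}"
  define sel where "sel m = (SOME p. QP p \<and> incid p g \<and> incid p m)" for m
  define f where "f m = proj_class (sel m)" for m
  have selP: "QP (sel m) \<and> incid (sel m) g \<and> incid (sel m) m" if "m \<in> X" for m
  proof -
    have "\<exists>p. QP p \<and> incid p g \<and> incid p m" using that unfolding X_def meets_def by blast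
    then show ?thesis unfolding sel_def by (rule someI_ex)
  qed
  have fS: "f m \<in> S" if "m \<in> X" for m
    using selP[OF that] unfolding f_def S_def by blast
  have fib: "{m\<in>X. f m = proj_class p0} = {m\<in>Y. incid p0 m}" if p0: "QP p0" "incid p0 g" for p0
  proof (rule set_eqI, rule iffI)
    fix m assume "m \<in> {m\<in>X. f m = proj_class p0}"
    then have m: "m \<in> X" "proj_class p0 = proj_class (sel m)" unfolding f_def by auto
    then have "incid p0 m" using selP[OF m(1)] class_incid by blast
    then show "m \<in> {m\<in>Y. incid p0 m}" using m(1) unfolding X_def by blast
  next
    fix m assume "m \<in> {m\<in>Y. incid p0 m}"
    then have m: "m \<in> Y" "incid p0 m" by auto
    then have mX: "m \<in> X" unfolding X_def meets_def using p0 by blast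
    have mA: "m \<in> L \<union> K" and gm: "g \<noteq> m" using m Y by auto
    have s: "QP (sel m)" "incid (sel m) g" "incid (sel m) m" using selP[OF mX] by auto
    have "proj_class (sel m) = proj_class p0"
      by (rule same_pt[OF g mA gm QP_nz[OF s(1)] QP_nz[OF p0(1)] s(2) s(3) p0(2) m(2)])
    then show "m \<in> {m\<in>X. f m = proj_class p0}" using mX unfolding f_def by simp
  qed
  have Xeq: "X = (\<Union>C\<in>S. {m\<in>X. f m = C})" using fS by blast
  have finL': "finite X" by (rule finite_subset[OF _ finL]) (use Y in \<open>auto simp: X_def\<close>)
  have "card X = (\<Sum>C\<in>S. card {m\<in>X. f m = C})"
    by (subst Xeq, rule card_UN_disjoint) (use finS finL' in auto)
  also have "\<dots> = (\<Sum>C\<in>S. n)"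
  proof (rule sum.cong[OF refl])
    fix C assume "C \<in> S"
    then obtain p0 where p0: "C = proj_class p0" "QP p0" "incid p0 g" unfolding S_def by blast
    show "card {m\<in>X. f m = C} = n" using fib[OF p0(2,3)] n[OF p0(2,3)] p0(1) by simp
  qed
  also have "\<dots> = n * card S" by simp
  finally show ?thesis unfolding X_def numS .
qed

lemma K1:
  assumes k: "k \<in> K" and m: "m \<in> L"
  shows "meets k m"
proof -
  have kL: "k \<notin> L" using disj k by blast
  have "card {m\<in>L. meets k m} = 2 * num_LKLK_on L K k"
  proof (rule fiber_count)
    show "k \<in> L \<union> K" using k by simp
    show "L \<subseteq> L" by simp
    show "k \<notin> L" by (rule kL)
    show "0 < num_LKLK_on L K k" using nK k by simp
    show "card {m\<in>L. incid p m} = 2" if "QP p" "incid p k" for p using QP_L that(1) .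
  qed
  then have "card {m\<in>L. meets k m} = card L" using nK k cL by simp
  then have "{m\<in>L. meets k m} = L" by (intro card_subset_eq[OF finL]) auto
  then show ?thesis using m by blast
qed

lemma L1:
  assumes l: "l \<in> L"
  shows "card {m\<in>L-{l}. meets l m} = 4"
proof -
  have one: "card {m\<in>L-{l}. incid p m} = 1" if "QP p" "incid p l" for p
  proof -
    have "{m\<in>L-{l}. incid p m} = {m\<in>L. incid p m} - {l}" by blast
    then show ?thesis using card_Diff_singleton[of l "{m\<in>L. incid p m}"] that QP_L l by simp
  qed
  have "card {m\<in>L-{l}. meets l m} = 1 * num_LKLK_on L K l"
  proof (rule fiber_count)
    show "l \<in> L \<union> K" using l by simp
    show "L - {l} \<subseteq> L" by blast
    show "l \<notin> L - {l}" by simp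
    show "0 < num_LKLK_on L K l" using nL l by simp
    show "card {m\<in>L-{l}. incid p m} = 1" if "QP p" "incid p l" for p using one that .
  qed
  then show ?thesis using nL l by simp
qed

end


context conf begin

lemma partner_ex:
  assumes l: "l \<in> L" shows "\<exists>m\<in>L. m \<noteq> l \<and> \<not> meets l m"
proof (rule ccontr)
  assume "\<not> ?thesis"
  then have "{m\<in>L-{l}. meets l m} = L - {l}" by blast
  then have "card (L - {l}) = 4" using L1[OF l] by simp
  then show False using card_Diff_singleton[OF l] cL by simp
qed

lemma partner_uniq:
  assumes "l \<in> L" "m1 \<in> L" "m2 \<in> L" "m1 \<noteq> l" "m2 \<noteq> l" "\<not> meets l m1" "\<not> meets l m2"
  shows "m1 = m2"
proof (rule ccontr)
  assume ne: "m1 \<noteq> m2"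
  have sub: "{m\<in>L-{l}. meets l m} \<subseteq> L - {l,m1,m2}" using assms by auto
  have c3: "card {l,m1,m2} = 3" using assms ne by auto
  have "card (L - {l,m1,m2}) = 3"
    using card_Diff_subset[of "{l,m1,m2}" L] assms c3 cL by simp
  moreover have "card {m\<in>L-{l}. meets l m} \<le> card (L - {l,m1,m2})"
    by (rule card_mono[OF _ sub]) (simp add: finL)
  ultimately show False using L1[OF assms(1)] by simp
qed

lemma meets_cross:
  assumes "x \<in> L" "y \<in> L" "x2 \<in> L" "x \<noteq> y" "x \<noteq> x2" "y \<noteq> x2" "\<not> meets x x2"
  shows "meets x y"
  using partner_uniq[of x y x2] assms by metis

definition six where
  "six x y x2 y2 z z2 \<longleftrightarrow> x \<in> L \<and> y \<in> L \<and> x2 \<in> L \<and> y2 \<in> L \<and> z \<in> L \<and> z2 \<in> L \<and>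
     distinct [x,y,x2,y2,z,z2] \<and> \<not> meets x x2 \<and> \<not> meets y y2 \<and> \<not> meets z z2"

lemma six_L:
  assumes "six x y x2 y2 z z2" shows "L = {x,y,x2,y2,z,z2}"
proof -
  have sub: "{x,y,x2,y2,z,z2} \<subseteq> L" using assms unfolding six_def by auto
  have "card {x,y,x2,y2,z,z2} = 6" using assms unfolding six_def by simp
  then show ?thesis using card_subset_eq[OF finL sub] cL by simp
qed

lemma six_swap: "six x y x2 y2 z z2 \<Longrightarrow> six x y x2 y2 z2 z"
  unfolding six_def using meets_sym by auto

lemma KL: "k \<in> K \<Longrightarrow> m \<in> L \<Longrightarrow> k \<noteq> m" using disj by blast

lemma second:
  assumes s: "six x y x2 y2 z z2" and k: "k \<in> K" and p: "QP p" "incid p k" "incid p x" "incid p y"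
  shows "\<exists>q. QP q \<and> incid q k \<and> incid q x2 \<and> (incid q z \<or> incid q z2)"
proof -
  have inL: "x \<in> L" "y \<in> L" "x2 \<in> L" "y2 \<in> L" "z \<in> L" "z2 \<in> L" and
    d: "distinct [x,y,x2,y2,z,z2]" and nm: "\<not> meets x x2" "\<not> meets y y2" "\<not> meets z z2"
    using s unfolding six_def by auto
  have Leq: "L = {x,y,x2,y2,z,z2}" using six_L[OF s] .
  obtain q where q: "QP q" "incid q k" "incid q x2" using K1[OF k inL(3)] unfolding meets_def by blast
  obtain w where w: "w \<in> L" "w \<noteq> x2" "incid q w" using other_L[OF q(1) inL(3) q(3)] by blast
  have kA: "k \<in> L \<union> K" using k by simp
  have wcases: "w = x \<or> w = y \<or> w = y2 \<or> w = z \<or> w = z2" using w Leq by auto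
  show ?thesis
  proof (cases "w = z \<or> w = z2")
    case True then show ?thesis using q w by blast
  next
    case False
    have "w \<noteq> x"
    proof
      assume "w = x" then have "meets x x2" using q w unfolding meets_def by blast
      then show False using nm by simp
    qed
    moreover have "w \<noteq> y"
    proof
      assume wy: "w = y"
      have "incid p x2"
        by (rule transfer[OF kA _ KL[OF k inL(2)] QP_nz[OF p(1)] QP_nz[OF q(1)] p(2) p(4) q(2)])
           (use inL wy w q in auto)
      then show False using no3[OF p(1) inL(1) inL(2) inL(3)] d p by auto
    qed
    moreover have "w \<noteq> y2"
    proof
      assume wy: "w = y2"
      obtain r where r: "QP r" "incid r k" "incid r z" using K1[OF k inL(5)] unfolding meets_def by blast
      obtain w2 where w2: "w2 \<in> L" "w2 \<noteq> z" "incid r w2" using other_L[OF r(1) inL(5) r(3)] by blast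
      have "w2 = x \<or> w2 = y \<or> w2 = x2 \<or> w2 = y2 \<or> w2 = z2" using w2 Leq by auto
      moreover have "w2 \<noteq> z2" using nm r w2 unfolding meets_def by blast
      moreover have "w2 \<noteq> x"
      proof
        assume "w2 = x"
        have "incid p z"
          by (rule transfer[OF kA _ KL[OF k inL(1)] QP_nz[OF p(1)] QP_nz[OF r(1)] p(2) p(3) r(2)])
             (use inL w2 r \<open>w2 = x\<close> in auto)
        then show False using no3[OF p(1) inL(1) inL(2) inL(5)] d p by auto
      qed
      moreover have "w2 \<noteq> y"
      proof
        assume "w2 = y"
        have "incid p z"
          by (rule transfer[OF kA _ KL[OF k inL(2)] QP_nz[OF p(1)] QP_nz[OF r(1)] p(2) p(4) r(2)])
             (use inL w2 r \<open>w2 = y\<close> in auto)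
        then show False using no3[OF p(1) inL(1) inL(2) inL(5)] d p by auto
      qed
      moreover have "w2 \<noteq> x2"
      proof
        assume "w2 = x2"
        have "incid q z"
          by (rule transfer[OF kA _ KL[OF k inL(3)] QP_nz[OF q(1)] QP_nz[OF r(1)] q(2) q(3) r(2)])
             (use inL w2 r \<open>w2 = x2\<close> in auto)
        then show False using no3[OF q(1) inL(3) inL(4) inL(5)] d q w wy by auto
      qed
      moreover have "w2 \<noteq> y2"
      proof
        assume "w2 = y2"
        have "incid q z"
          by (rule transfer[OF kA _ KL[OF k inL(4)] QP_nz[OF q(1)] QP_nz[OF r(1)] q(2) _ r(2)])
             (use inL w2 r w wy \<open>w2 = y2\<close> in auto)
        then show False using no3[OF q(1) inL(3) inL(4) inL(5)] d q w wy by auto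
      qed
      ultimately show False by blast
    qed
    ultimately show ?thesis using wcases False by blast
  qed
qed

end


context conf begin

lemma third:
  assumes s: "six x y x2 y2 z z2" and k: "k \<in> K" and p: "QP p" "incid p k" "incid p x" "incid p y"
    and q: "QP q" "incid q k" "incid q x2" "incid q z"
  shows "\<exists>r. QP r \<and> incid r k \<and> incid r y2 \<and> incid r z2"
proof -
  have inL: "x \<in> L" "y \<in> L" "x2 \<in> L" "y2 \<in> L" "z \<in> L" "z2 \<in> L" and
    d: "distinct [x,y,x2,y2,z,z2]" and nm: "\<not> meets x x2" "\<not> meets y y2" "\<not> meets z z2"
    using s unfolding six_def by auto
  have Leq: "L = {x,y,x2,y2,z,z2}" using six_L[OF s] .
  have kA: "k \<in> L \<union> K" using k by simp
  obtain r where r: "QP r" "incid r k" "incid r y2" using K1[OF k inL(4)] unfolding meets_def by blast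
  obtain w where w: "w \<in> L" "w \<noteq> y2" "incid r w" using other_L[OF r(1) inL(4) r(3)] by blast
  have "w = x \<or> w = y \<or> w = x2 \<or> w = z \<or> w = z2" using w Leq by auto
  moreover have "w \<noteq> x"
  proof
    assume "w = x"
    have "incid p y2"
      by (rule transfer[OF kA _ KL[OF k inL(1)] QP_nz[OF p(1)] QP_nz[OF r(1)] p(2) p(3) r(2)])
         (use inL w r \<open>w = x\<close> in auto)
    then show False using no3[OF p(1) inL(1) inL(2) inL(4)] d p by auto
  qed
  moreover have "w \<noteq> y"
  proof
    assume "w = y"
    have "incid p y2"
      by (rule transfer[OF kA _ KL[OF k inL(2)] QP_nz[OF p(1)] QP_nz[OF r(1)] p(2) p(4) r(2)])
         (use inL w r \<open>w = y\<close> in auto)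
    then show False using no3[OF p(1) inL(1) inL(2) inL(4)] d p by auto
  qed
  moreover have "w \<noteq> x2"
  proof
    assume "w = x2"
    have "incid q y2"
      by (rule transfer[OF kA _ KL[OF k inL(3)] QP_nz[OF q(1)] QP_nz[OF r(1)] q(2) q(3) r(2)])
         (use inL w r \<open>w = x2\<close> in auto)
    then show False using no3[OF q(1) inL(3) inL(4) inL(5)] d q by auto
  qed
  moreover have "w \<noteq> z"
  proof
    assume "w = z"
    have "incid q y2"
      by (rule transfer[OF kA _ KL[OF k inL(5)] QP_nz[OF q(1)] QP_nz[OF r(1)] q(2) q(4) r(2)])
         (use inL w r \<open>w = z\<close> in auto)
    then show False using no3[OF q(1) inL(3) inL(4) inL(5)] d q by auto
  qed
  ultimately have "w = z2" by blast
  then show ?thesis using r w by blast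
qed

lemma both:
  assumes s: "six x y x2 y2 z z2"
  shows "\<exists>k p q r. k \<in> K \<and> QP p \<and> QP q \<and> QP r \<and> incid p k \<and> incid p x \<and> incid p y
     \<and> incid q k \<and> incid q x2 \<and> incid q z \<and> incid r k \<and> incid r y2 \<and> incid r z2"
proof -
  have inL: "x \<in> L" "y \<in> L" "x2 \<in> L" "y2 \<in> L" "z \<in> L" "z2 \<in> L" and
    d: "distinct [x,y,x2,y2,z,z2]" and nm: "\<not> meets x x2" "\<not> meets y y2" "\<not> meets z z2"
    using s unfolding six_def by auto
  have "meets x y" by (rule meets_cross[OF inL(1,2,3) _ _ _ nm(1)]) (use d in auto)
  then obtain p where p: "QP p" "incid p x" "incid p y" unfolding meets_def by blast
  obtain k1 k2 where kk: "k1 \<in> K" "k2 \<in> K" "k1 \<noteq> k2" "incid p k1" "incid p k2" using two_K[OF p(1)] by blast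
  have goal: "\<exists>k p q r. k \<in> K \<and> QP p \<and> QP q \<and> QP r \<and> incid p k \<and> incid p x \<and> incid p y
     \<and> incid q k \<and> incid q x2 \<and> incid q z \<and> incid r k \<and> incid r y2 \<and> incid r z2"
    if "k \<in> K" "incid p k" "QP q" "incid q k" "incid q x2" "incid q z" for k q
    using third[OF s that(1) p(1) that(2) p(2) p(3) that(3-6)] that p by blast
  obtain q1 where q1: "QP q1" "incid q1 k1" "incid q1 x2" "incid q1 z \<or> incid q1 z2"
    using second[OF s kk(1) p(1) kk(4) p(2,3)] by blast
  obtain q2 where q2: "QP q2" "incid q2 k2" "incid q2 x2" "incid q2 z \<or> incid q2 z2"
    using second[OF s kk(2) p(1) kk(5) p(2,3)] by blast
  show ?thesis
  proof (cases "incid q1 z \<or> incid q2 z")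
    case True
    then show ?thesis using goal kk q1 q2 by blast
  next
    case False
    then have z1: "incid q1 z2" "incid q2 z2" using q1 q2 by auto
    have x2z2: "x2 \<in> L \<union> K" "z2 \<in> L \<union> K" "x2 \<noteq> z2" using inL d by auto
    have "proj_class q2 = proj_class q1"
      by (rule same_pt[OF x2z2 QP_nz[OF q2(1)] QP_nz[OF q1(1)] q2(3) z1(2) q1(3) z1(1)])
    then have "incid q2 k1" using class_incid q1(2) by blast
    have kA: "k1 \<in> L \<union> K" "k2 \<in> L \<union> K" using kk by auto
    have "incid p x2"
      by (rule transfer[OF kA kk(3) QP_nz[OF p(1)] QP_nz[OF q2(1)] kk(4) kk(5) \<open>incid q2 k1\<close> q2(2) q2(3)])
    then have False using no3[OF p(1) inL(1) inL(2) inL(3)] d p by auto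
    then show ?thesis ..
  qed
qed

lemma det_six:
  assumes s: "six x y x2 y2 z z2"
  shows "det3 (cross x y) (cross x2 z) (cross y2 z2) = 0"
proof -
  have inL: "x \<in> L" "y \<in> L" "x2 \<in> L" "y2 \<in> L" "z \<in> L" "z2 \<in> L" and
    d: "distinct [x,y,x2,y2,z,z2]"
    using s unfolding six_def by auto
  obtain k p q r where h: "k \<in> K" "QP p" "QP q" "QP r" "incid p k" "incid p x" "incid p y"
     "incid q k" "incid q x2" "incid q z" "incid r k" "incid r y2" "incid r z2" using both[OF s] by blast
  show ?thesis
  proof (rule det_from_pts)
    show "k \<noteq> (0,0,0)" using nzA h(1) by simp
    show "p \<noteq> (0,0,0)" "q \<noteq> (0,0,0)" "r \<noteq> (0,0,0)" using QP_nz h by auto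
    show "cross x y \<noteq> (0,0,0)" "cross x2 z \<noteq> (0,0,0)" "cross y2 z2 \<noteq> (0,0,0)"
      using distA inL d by auto
  qed (use h in auto)
qed

lemma noncol:
  assumes "x \<in> L" "y \<in> L" "z \<in> L" "x \<noteq> y" "x \<noteq> z" "y \<noteq> z" "meets x y"
  shows "det3 x y z \<noteq> 0"
proof
  assume dz: "det3 x y z = 0"
  obtain p where p: "QP p" "incid p x" "incid p y" using assms(7) unfolding meets_def by blast
  have "incid p z" by (rule det_on[OF distA QP_nz[OF p(1)] p(2) p(3) dz]) (use assms in auto)
  then show False using no3[OF p(1) assms(1-6)] p by blast
qed

end


context conf begin

lemma pd:
  assumes "u \<in> L" "u2 \<in> L" "v \<in> L" "v2 \<in> L" "u \<noteq> u2" "\<not> meets u u2" "v \<noteq> v2" "\<not> meets v v2"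
    "v \<noteq> u" "v \<noteq> u2"
  shows "v2 \<noteq> u \<and> v2 \<noteq> u2"
proof
  show "v2 \<noteq> u"
  proof
    assume "v2 = u"
    then have "\<not> meets u v" using assms meets_sym by blast
    then have "v = u2" using partner_uniq[of u v u2] assms by blast
    then show False using assms by blast
  qed
  show "v2 \<noteq> u2"
  proof
    assume "v2 = u2"
    then have "\<not> meets u2 v" "\<not> meets u2 u" using assms meets_sym by blast+
    then have "v = u" using partner_uniq[of u2 v u] assms by blast
    then show False using assms by blast
  qed
qed

lemma contra: False
proof -
  have "L \<noteq> {}" using cL by auto
  then obtain a where a: "a \<in> L" by blast
  obtain a2 where a2: "a2 \<in> L" "a2 \<noteq> a" "\<not> meets a a2" using partner_ex[OF a] by blast
  have "card (L - {a,a2}) = 4" using card_Diff_subset[of "{a,a2}" L] a a2 cL by simp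
  then have "L - {a,a2} \<noteq> {}" by fastforce
  then obtain b where b: "b \<in> L" "b \<noteq> a" "b \<noteq> a2" by blast
  obtain b2 where b2: "b2 \<in> L" "b2 \<noteq> b" "\<not> meets b b2" using partner_ex[OF b(1)] by blast
  have b2n: "b2 \<noteq> a" "b2 \<noteq> a2" using pd[OF a a2(1) b(1) b2(1) a2(2)[symmetric] a2(3) b2(2)[symmetric] b2(3) b(2) b(3)] by auto
  have "card {a,a2,b,b2} = 4" using a2 b b2 b2n by auto
  then have "card (L - {a,a2,b,b2}) = 2" using card_Diff_subset[of "{a,a2,b,b2}" L] a a2 b b2 cL by simp
  then have "L - {a,a2,b,b2} \<noteq> {}" by fastforce
  then obtain c where c: "c \<in> L" "c \<noteq> a" "c \<noteq> a2" "c \<noteq> b" "c \<noteq> b2" by blast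
  obtain c2 where c2: "c2 \<in> L" "c2 \<noteq> c" "\<not> meets c c2" using partner_ex[OF c(1)] by blast
  have c2n: "c2 \<noteq> a" "c2 \<noteq> a2" using pd[OF a a2(1) c(1) c2(1) a2(2)[symmetric] a2(3) c2(2)[symmetric] c2(3) c(2) c(3)] by auto
  have c2m: "c2 \<noteq> b" "c2 \<noteq> b2" using pd[OF b(1) b2(1) c(1) c2(1) b2(2)[symmetric] b2(3) c2(2)[symmetric] c2(3) c(4) c(5)] by auto
  note dist = a2(2) b(2) b(3) b2(2) b2n c(2-5) c2(2) c2n c2m
  note nm = a2(3) b2(3) c2(3)
  have sixes: "six a b a2 b2 c c2" "six a b2 a2 b c c2" "six a b2 a2 b c2 c"
      "six a c a2 c2 b2 b" "six a c2 a2 c b2 b"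
    unfolding six_def using a a2(1) b(1) b2(1) c(1) c2(1) dist nm meets_sym by auto
  have E1: "det3 (cross a b) (cross a2 c) (cross b2 c2) = 0" using det_six[OF sixes(1)] .
  have E3: "det3 (cross a b2) (cross a2 c) (cross b c2) = 0" using det_six[OF sixes(2)] .
  have E4: "det3 (cross a b2) (cross a2 c2) (cross b c) = 0" using det_six[OF sixes(3)] .
  have E6: "det3 (cross a c) (cross a2 b2) (cross b c2) = 0"
    using det_six[OF sixes(4)] det3_swap3[of "cross a c" "cross a2 b2" c2 b] by simp
  have E8: "det3 (cross a c2) (cross a2 b2) (cross b c) = 0"
    using det_six[OF sixes(5)] det3_swap3[of "cross a c2" "cross a2 b2" c b] by simp
  have mab: "meets a b" by (rule meets_cross[OF a b(1) a2(1) _ _ _ a2(3)]) (use dist in auto)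
  have mba2: "meets b a2" by (rule meets_cross[OF b(1) a2(1) b2(1) _ _ _ b2(3)]) (use dist in auto)
  have mab2: "meets a b2" by (rule meets_cross[OF a b2(1) a2(1) _ _ _ a2(3)]) (use dist in auto)
  have D: "det3 a b a2 \<noteq> 0" by (rule noncol[OF a b(1) a2(1) _ _ _ mab]) (use dist in auto)
  have g1': "det3 b a2 b2 \<noteq> 0" by (rule noncol[OF b(1) a2(1) b2(1) _ _ _ mba2]) (use dist in auto)
  have g1: "det3 b2 b a2 \<noteq> 0" using g1' det3_cyc[of b2 b a2] by simp
  have g2: "det3 a b2 a2 \<noteq> 0" by (rule noncol[OF a b2(1) a2(1) _ _ _ mab2]) (use dist in auto)
  have g3: "det3 a b b2 \<noteq> 0" by (rule noncol[OF a b(1) b2(1) _ _ _ mab]) (use dist in auto)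
  have "cross c b2 = (0,0,0) \<or> cross c c2 = (0,0,0)"
    by (rule core_gen[OF D g1 g2 g3 E1 E3 E4 E6 E8])
  moreover have "cross c b2 \<noteq> (0,0,0)" using distA c(1) b2(1) c(5) by simp
  moreover have "cross c c2 \<noteq> (0,0,0)" using distA c(1) c2(1) c2(2) by simp
  ultimately show False by blast
qed

end

theorem lemma3p6:
  shows "\<not> (\<exists>L K. line_arrangement (L \<union> K) \<and> L \<inter> K = {} \<and> card L = 6 \<and> card K = 8 \<and>
             (\<forall>l\<in>L. num_LKLK_on L K l = 4) \<and> (\<forall>k\<in>K. num_LKLK_on L K k = 3))"
proof
  assume "\<exists>L K. line_arrangement (L \<union> K) \<and> L \<inter> K = {} \<and> card L = 6 \<and> card K = 8 \<and>
             (\<forall>l\<in>L. num_LKLK_on L K l = 4) \<and> (\<forall>k\<in>K. num_LKLK_on L K k = 3)"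
  then obtain L K where h: "line_arrangement (L \<union> K)" "L \<inter> K = {}" "card L = 6" "card K = 8"
    "\<forall>l\<in>L. num_LKLK_on L K l = 4" "\<forall>k\<in>K. num_LKLK_on L K k = 3" by blast
  have "conf L K" using h by (unfold_locales)
  then show False using conf.contra by blast
qed


end
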